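(* Let $\mu$ be a finite positive measure on $(\Omega,\mathcal B)$ with no atoms. Let $X=\operatorname{sp}\{1_A-1_B: A,B\in\mathcal B,\ \mu(A)=\mu(B)\}$, let $X_1$ be the norm closure of $X$ in $L_1(\mu)$ and $X_\infty$ the weak$^*$ ($\sigma(L_\infty,L_1)$) closure of $X$ in $L_\infty(\mu)$. Then $X_1=L^0_1$ and $X_\infty=L^0_\infty$, where $L^0_1=\{f\in L_1(\mu):\int f\,d\mu=0\}$ and $L^0_\infty=\{f\in L_\infty(\mu):\int f\,d\mu=0\}$.
   Context: An atom of $\mu$ is a set $A\in\mathcal B$ with $\mu(A)>0$ such that every measurable $B\subset A$ has $\mu(B)\in\{0,\mu(A)\}$. $\operatorname{sp}$ denotes linear span. *)

theory Defs
  imports "HOL-Analysis.Analysis"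
begin

definition atom :: "'a measure \<Rightarrow> 'a set \<Rightarrow> bool" where
  "atom M A \<longleftrightarrow> A \<in> sets M \<and> emeasure M A > 0 \<and>
     (\<forall>B\<in>sets M. B \<subseteq> A \<longrightarrow> emeasure M B = 0 \<or> emeasure M B = emeasure M A)"

definition Xsp :: "'a measure \<Rightarrow> ('a \<Rightarrow> real) set" where
  "Xsp M = {f. \<exists>(n::nat) c A B. (\<forall>i<n. A i \<in> sets M \<and> B i \<in> sets M \<and>
                                 emeasure M (A i) = emeasure M (B i)) \<and>
              f = (\<lambda>x. \<Sum>i<n. (c i :: real) * (indicator (A i) x - indicator (B i) x))}"

text \<open>L_1(M) and L_infinity(M), as sets of representatives (functions).\<close>
definition L1 :: "'a measure \<Rightarrow> ('a \<Rightarrow> real) set" where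
  "L1 M = {f. integrable M f}"

definition Linfty :: "'a measure \<Rightarrow> ('a \<Rightarrow> real) set" where
  "Linfty M = {f. f \<in> borel_measurable M \<and> (\<exists>C. AE x in M. \<bar>f x\<bar> \<le> C)}"

definition L1_closure :: "'a measure \<Rightarrow> ('a \<Rightarrow> real) set \<Rightarrow> ('a \<Rightarrow> real) set" where
  "L1_closure M S = {f \<in> L1 M. \<forall>e>0. \<exists>g\<in>S. g \<in> L1 M \<and> (\<integral>x. \<bar>f x - g x\<bar> \<partial>M) < e}"

text \<open>Closure in L_infinity for the weak* topology sigma(L_infinity, L_1), described by
  its basic neighbourhoods {g. \<forall>h\<in>H. |\<integral>(f - g) h| < e}, H finite subset of L_1.\<close>
definition weak_star_closure :: "'a measure \<Rightarrow> ('a \<Rightarrow> real) set \<Rightarrow> ('a \<Rightarrow> real) set" where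
  "weak_star_closure M S = {f \<in> Linfty M. \<forall>H e. finite H \<and> H \<subseteq> L1 M \<and> e > 0 \<longrightarrow>
      (\<exists>g\<in>S. g \<in> Linfty M \<and> (\<forall>h\<in>H. \<bar>\<integral>x. (f x - g x) * h x \<partial>M\<bar> < e))}"

end

theory Submission
  imports Defs
begin

lemma XspI:
  fixes n :: nat
  assumes "\<forall>i<n. A i \<in> sets M \<and> B i \<in> sets M \<and> emeasure M (A i) = emeasure M (B i)"
    and "f = (\<lambda>x. \<Sum>i<n. (c i :: real) * (indicator (A i) x - indicator (B i) x))"
  shows "f \<in> Xsp M"
  unfolding Xsp_def mem_Collect_eq
  by (rule exI[of _ n], rule exI[of _ c], rule exI[of _ A], rule exI[of _ B]) (rule conjI[OF assms])

lemma XspE: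
  assumes "f \<in> Xsp M"
  obtains n :: nat and c A B where "\<forall>i<n. A i \<in> sets M \<and> B i \<in> sets M \<and> emeasure M (A i) = emeasure M (B i)"
    and "f = (\<lambda>x. \<Sum>i<n. (c i :: real) * (indicator (A i) x - indicator (B i) x))"
  using assms unfolding Xsp_def mem_Collect_eq by (elim exE conjE) (rule that; assumption)


lemma sum_lessThan_add: "(\<Sum>i<n+m. g i) = (\<Sum>i<n. g i) + (\<Sum>i<m. g (n+i))" for g :: "nat \<Rightarrow> 'b::comm_monoid_add"
  by (induct m) (simp_all add: ac_simps)

lemma Xsp_zero: "(\<lambda>x. 0) \<in> Xsp M"
  by (rule XspI[where n=0]) auto

lemma Xsp_scale: assumes "f \<in> Xsp M" shows "(\<lambda>x. r * f x) \<in> Xsp M"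
proof -
  from assms obtain n :: nat and c A B where h: "\<forall>i<n. A i \<in> sets M \<and> B i \<in> sets M \<and> emeasure M (A i) = emeasure M (B i)"
    and f: "f = (\<lambda>x. \<Sum>i<n. (c i :: real) * (indicator (A i) x - indicator (B i) x))"
    by (rule XspE)
  show ?thesis
    by (rule XspI[OF h, where c="\<lambda>i. r * c i"]) (simp add: f sum_distrib_left mult.assoc)
qed

lemma Xsp_add: assumes "f \<in> Xsp M" "g \<in> Xsp M" shows "(\<lambda>x. f x + g x) \<in> Xsp M"
proof -
  from assms(1) obtain n :: nat and c A B where h: "\<forall>i<n. A i \<in> sets M \<and> B i \<in> sets M \<and> emeasure M (A i) = emeasure M (B i)"
    and f: "f = (\<lambda>x. \<Sum>i<n. (c i :: real) * (indicator (A i) x - indicator (B i) x))"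
    by (rule XspE)
  from assms(2) obtain n2 :: nat and c2 A2 B2 where h2: "\<forall>i<n2. A2 i \<in> sets M \<and> B2 i \<in> sets M \<and> emeasure M (A2 i) = emeasure M (B2 i)"
    and g: "g = (\<lambda>x. \<Sum>i<n2. (c2 i :: real) * (indicator (A2 i) x - indicator (B2 i) x))"
    by (rule XspE)
  define c' where "c' i = (if i < n then c i else c2 (i - n))" for i
  define A' where "A' i = (if i < n then A i else A2 (i - n))" for i
  define B' where "B' i = (if i < n then B i else B2 (i - n))" for i
  have h': "\<forall>i<n+n2. A' i \<in> sets M \<and> B' i \<in> sets M \<and> emeasure M (A' i) = emeasure M (B' i)"
  proof (intro allI impI)
    fix i assume "i < n + n2"
    then show "A' i \<in> sets M \<and> B' i \<in> sets M \<and> emeasure M (A' i) = emeasure M (B' i)"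
      using h h2 by (cases "i < n") (auto simp: A'_def B'_def)
  qed
  show ?thesis
  proof (rule XspI[OF h', where c=c'])
    show "(\<lambda>x. f x + g x) = (\<lambda>x. \<Sum>i<n+n2. c' i * (indicator (A' i) x - indicator (B' i) x))"
    proof
      fix x
      have "(\<Sum>i<n+n2. c' i * (indicator (A' i) x - indicator (B' i) x))
        = (\<Sum>i<n. c' i * (indicator (A' i) x - indicator (B' i) x)) + (\<Sum>i<n2. c' (n+i) * (indicator (A' (n+i)) x - indicator (B' (n+i)) x))"
        by (rule sum_lessThan_add)
      also have "(\<Sum>i<n. c' i * (indicator (A' i) x - indicator (B' i) x)) = f x"
        unfolding f by (intro sum.cong) (auto simp: c'_def A'_def B'_def)
      also have "(\<Sum>i<n2. c' (n+i) * (indicator (A' (n+i)) x - indicator (B' (n+i)) x)) = g x"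
        unfolding g by (intro sum.cong) (auto simp: c'_def A'_def B'_def)
      finally show "f x + g x = (\<Sum>i<n+n2. c' i * (indicator (A' i) x - indicator (B' i) x))" by simp
    qed
  qed
qed

lemma Xsp_sum: "finite S \<Longrightarrow> (\<And>y. y \<in> S \<Longrightarrow> F y \<in> Xsp M) \<Longrightarrow> (\<lambda>x. \<Sum>y\<in>S. F y x) \<in> Xsp M"
proof (induct S rule: finite_induct)
  case empty then show ?case using Xsp_zero by simp
next
  case (insert a S)
  then have "(\<lambda>x. F a x + (\<Sum>y\<in>S. F y x)) \<in> Xsp M" by (intro Xsp_add) auto
  then show ?case using insert by simp
qed

lemma (in finite_measure) Xsp_props:
  assumes "f \<in> Xsp M"
  shows "f \<in> borel_measurable M" "integrable M f" "(\<integral>x. f x \<partial>M) = 0" "\<exists>C. \<forall>x. \<bar>f x\<bar> \<le> C"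
proof -
  from assms obtain n :: nat and c A B where h: "\<forall>i<n. A i \<in> sets M \<and> B i \<in> sets M \<and> emeasure M (A i) = emeasure M (B i)"
    and f: "f = (\<lambda>x. \<Sum>i<n. (c i :: real) * (indicator (A i) x - indicator (B i) x))"
    by (rule XspE)
  have int: "integrable M (\<lambda>x. (c i :: real) * (indicator (A i) x - indicator (B i) x))" if "i < n" for i
  proof -
    have "A i \<in> sets M" "B i \<in> sets M" using h that by auto
    then have "integrable M (\<lambda>x. indicator (A i) x - indicator (B i) x :: real)"
      by (auto simp: emeasure_finite less_top[symmetric])
    then show ?thesis by (rule integrable_mult_right)
  qed
  show "integrable M f" unfolding f by (rule Bochner_Integration.integrable_sum) (use int in auto)
  then show "f \<in> borel_measurable M" by auto
  have "(\<integral>x. f x \<partial>M) = (\<Sum>i<n. (\<integral>x. (c i :: real) * (indicator (A i) x - indicator (B i) x) \<partial>M))"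
    unfolding f by (rule Bochner_Integration.integral_sum) (use int in auto)
  also have "\<dots> = (\<Sum>i<n. 0)"
  proof (intro sum.cong refl)
    fix i assume "i \<in> {..<n}"
    then have "A i \<in> sets M" "B i \<in> sets M" "measure M (A i) = measure M (B i)" using h by (auto simp: measure_def)
    moreover have "(\<integral>x. (indicator (A i) x - indicator (B i) x :: real) \<partial>M) = measure M (A i) - measure M (B i)"
      using calculation by (subst Bochner_Integration.integral_diff) (auto simp: emeasure_finite less_top[symmetric])
    ultimately show "(\<integral>x. (c i :: real) * (indicator (A i) x - indicator (B i) x) \<partial>M) = 0"
      by simp
  qed
  finally show "(\<integral>x. f x \<partial>M) = 0" by simp
  have "\<bar>f x\<bar> \<le> (\<Sum>i<n. \<bar>c i\<bar>)" for x
  proof -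
    have "\<bar>f x\<bar> \<le> (\<Sum>i<n. \<bar>c i * (indicator (A i) x - indicator (B i) x)\<bar>)"
      unfolding f by (rule sum_abs)
    also have "\<dots> \<le> (\<Sum>i<n. \<bar>c i\<bar>)"
      by (intro sum_mono) (auto simp: abs_mult indicator_def)
    finally show ?thesis .
  qed
  then show "\<exists>C. \<forall>x. \<bar>f x\<bar> \<le> C" by blast
qed

lemma (in finite_measure) split_half:
  assumes na: "\<And>A. \<not> atom M A" and B: "B \<in> sets M" "measure M B > 0"
  shows "\<exists>C\<in>sets M. C \<subseteq> B \<and> 0 < measure M C \<and> measure M C \<le> measure M B / 2"
proof -
  have "emeasure M B > 0" using B by (simp add: emeasure_eq_measure)
  then obtain C where C: "C \<in> sets M" "C \<subseteq> B" "emeasure M C \<noteq> 0" "emeasure M C \<noteq> emeasure M B"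
    using na[of B] B unfolding atom_def by auto
  have m: "measure M C \<noteq> 0" "measure M C \<noteq> measure M B"
    using C by (auto simp: emeasure_eq_measure)
  have le: "measure M C \<le> measure M B" using C B finite_measure_mono by auto
  have d: "measure M (B - C) = measure M B - measure M C"
    using C B by (simp add: finite_measure_Diff)
  have pos: "measure M C > 0" using m measure_nonneg[of M C] by linarith
  show ?thesis
  proof (cases "measure M C \<le> measure M B / 2")
    case True then show ?thesis using C pos by auto
  next
    case False
    then show ?thesis using C B d m le
      by (intro bexI[of _ "B - C"]) auto
  qed
qed

lemma (in finite_measure) small_subset:
  assumes na: "\<And>A. \<not> atom M A" and A: "A \<in> sets M" "measure M A > 0" and e: "e > 0"
  shows "\<exists>B\<in>sets M. B \<subseteq> A \<and> 0 < measure M B \<and> measure M B < e"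
proof -
  have *: "\<exists>B\<in>sets M. B \<subseteq> A \<and> 0 < measure M B \<and> measure M B \<le> measure M A / 2^n" for n
  proof (induct n)
    case 0 then show ?case using A by auto
  next
    case (Suc n)
    then obtain B where B: "B \<in> sets M" "B \<subseteq> A" "0 < measure M B" "measure M B \<le> measure M A / 2^n" by blast
    then obtain C where C: "C \<in> sets M" "C \<subseteq> B" "0 < measure M C" "measure M C \<le> measure M B / 2"
      using split_half[OF na B(1,3)] by blast
    have "measure M C * 2 ^ Suc n = (2 * measure M C) * 2 ^ n" by simp
    also have "\<dots> \<le> measure M B * 2 ^ n" by (rule mult_right_mono) (use C(4) in auto)
    also have "\<dots> \<le> measure M A" using B(4) by (simp add: pos_le_divide_eq)
    finally have "measure M C \<le> measure M A / 2^Suc n" by (simp add: pos_le_divide_eq)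
    then show ?case using B C by blast
  qed
  obtain n where n: "measure M A / e < 2 ^ n" using real_arch_pow[of 2 "measure M A / e"] by auto
  then have "measure M A / 2^n < e" using e by (simp add: field_simps)
  moreover obtain B where "B\<in>sets M" "B \<subseteq> A" "0 < measure M B" "measure M B \<le> measure M A / 2^n"
    using *[of n] by blast
  ultimately show ?thesis by (intro bexI[of _ B]) auto
qed

lemma (in finite_measure) sierpinski:
  assumes na: "\<And>A. \<not> atom M A" and A: "A \<in> sets M" and s: "0 \<le> s" "s \<le> measure M A"
  shows "\<exists>B\<in>sets M. B \<subseteq> A \<and> measure M B = s"
proof -
  define I where "I B \<longleftrightarrow> B \<in> sets M \<and> B \<subseteq> A \<and> measure M B \<le> s" for B
  define cand where "cand B = {C. C \<in> sets M \<and> C \<subseteq> A - B \<and> measure M B + measure M C \<le> s}" for B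
  have step: "\<exists>C. C \<in> cand B \<and> (\<forall>D\<in>cand B. measure M D \<le> 2 * measure M C)" if "I B" for B
  proof -
    let ?S = "measure M ` cand B"
    have ne: "{} \<in> cand B" using that by (auto simp: I_def cand_def)
    have bdd: "bdd_above ?S" by (intro bdd_aboveI[of _ "measure M (space M)"]) (auto simp: bounded_measure)
    have sup0: "0 \<le> Sup ?S" using ne bdd by (metis cSup_upper image_eqI measure_empty)
    show ?thesis
    proof (cases "Sup ?S = 0")
      case True
      have "measure M D \<le> 2 * measure M {}" if "D \<in> cand B" for D
      proof -
        have "measure M D \<le> Sup ?S" by (rule cSup_upper) (use that bdd in auto)
        then show ?thesis using True by simp
      qed
      then show ?thesis using ne by blast
    next
      case False
      then have "Sup ?S / 2 < Sup ?S" using sup0 by auto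
      moreover have "?S \<noteq> {}" using ne by blast
      ultimately have "\<exists>x\<in>?S. Sup ?S / 2 < x" using less_cSup_iff[of ?S "Sup ?S / 2"] bdd by blast
      then obtain C where "C \<in> cand B" "Sup ?S / 2 < measure M C" by blast
      moreover have "measure M D \<le> 2 * measure M C" if "D \<in> cand B" for D
      proof -
        have "measure M D \<le> Sup ?S" by (rule cSup_upper) (use that bdd in auto)
        then show ?thesis using \<open>Sup ?S / 2 < measure M C\<close> by linarith
      qed
      ultimately show ?thesis by blast
    qed
  qed
  have "\<forall>B. \<exists>C. I B \<longrightarrow> C \<in> cand B \<and> (\<forall>D\<in>cand B. measure M D \<le> 2 * measure M C)"
    using step by blast
  then have "\<exists>f. \<forall>B. I B \<longrightarrow> f B \<in> cand B \<and> (\<forall>D\<in>cand B. measure M D \<le> 2 * measure M (f B))"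
    by (rule choice)
  then obtain f where f: "\<And>B. I B \<Longrightarrow> f B \<in> cand B \<and> (\<forall>D\<in>cand B. measure M D \<le> 2 * measure M (f B))"
    by blast
  define Bs where "Bs = rec_nat {} (\<lambda>n B. B \<union> f B)"
  have Bs0: "Bs 0 = {}" and BsS: "Bs (Suc n) = Bs n \<union> f (Bs n)" for n by (simp_all add: Bs_def)
  have IB: "I (Bs n)" for n
  proof (induct n)
    case 0 then show ?case using s by (simp add: Bs0 I_def)
  next
    case (Suc n)
    then have fc: "f (Bs n) \<in> cand (Bs n)" using f by blast
    then have "measure M (Bs n \<union> f (Bs n)) = measure M (Bs n) + measure M (f (Bs n))"
      using Suc by (intro finite_measure_Union) (auto simp: I_def cand_def)
    then show ?case using Suc fc by (auto simp: I_def cand_def BsS)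
  qed
  have fc: "f (Bs n) \<in> cand (Bs n)" and fmax: "\<And>D. D \<in> cand (Bs n) \<Longrightarrow> measure M D \<le> 2 * measure M (f (Bs n))" for n
    using f IB by blast+
  have mS: "measure M (Bs (Suc n)) = measure M (Bs n) + measure M (f (Bs n))" for n
    using IB[of n] fc[of n] unfolding BsS by (intro finite_measure_Union) (auto simp: I_def cand_def)
  have inc: "incseq Bs" by (rule incseq_SucI) (simp add: BsS)
  define U where "U = (\<Union>n. Bs n)"
  have Us: "U \<in> sets M" "U \<subseteq> A" using IB by (auto simp: U_def I_def)
  have lim: "(\<lambda>n. measure M (Bs n)) \<longlonglongrightarrow> measure M U"
    unfolding U_def using IB inc by (intro finite_Lim_measure_incseq) (auto simp: I_def)
  have Ule: "measure M U \<le> s" using lim IB by (intro LIMSEQ_le_const2) (auto simp: I_def)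
  have mono: "measure M (Bs n) \<le> measure M U" for n
    using Us by (intro finite_measure_mono) (auto simp: U_def)
  have limf: "(\<lambda>n. measure M (f (Bs n))) \<longlonglongrightarrow> 0"
  proof -
    have "(\<lambda>n. measure M (Bs (Suc n)) - measure M (Bs n)) \<longlonglongrightarrow> measure M U - measure M U"
      by (intro tendsto_diff lim LIMSEQ_Suc)
    then show ?thesis by (simp add: mS)
  qed
  show ?thesis
  proof (rule ccontr)
    assume "\<not> ?thesis"
    then have lt: "measure M U < s" using Ule Us by force
    have "measure M (A - U) = measure M A - measure M U" using Us A by (simp add: finite_measure_Diff)
    then have "measure M (A - U) > 0" using lt s by simp
    then obtain D where D: "D \<in> sets M" "D \<subseteq> A - U" "0 < measure M D" "measure M D < s - measure M U"
      using small_subset[OF na _ _, of "A - U" "s - measure M U"] Us A lt by auto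
    have "D \<in> cand (Bs n)" for n
      using D mono[of n] by (auto simp: cand_def U_def)
    then have le: "measure M D \<le> 2 * measure M (f (Bs n))" for n using fmax by blast
    have "eventually (\<lambda>n. measure M (f (Bs n)) < measure M D / 2) sequentially"
      using limf D(3) by (intro order_tendstoD) auto
    then obtain n where "measure M (f (Bs n)) < measure M D / 2" by (auto simp: eventually_sequentially)
    with le[of n] show False by linarith
  qed
qed

lemma (in finite_measure) partition_lemma:
  assumes na: "\<And>A. \<not> atom M A"
  shows "1 \<le> k \<Longrightarrow> A \<in> sets M \<Longrightarrow> E \<in> sets M \<Longrightarrow> E \<subseteq> A \<Longrightarrow> j < k \<Longrightarrow> real j * (measure M A / k) \<le> measure M E \<Longrightarrow>
   \<exists>P. (\<forall>i<k. P i \<in> sets M \<and> P i \<subseteq> A \<and> measure M (P i) = measure M A / k) \<and> (\<forall>i<j. P i \<subseteq> E)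
       \<and> disjoint_family_on P {..<k} \<and> (\<Union>i<k. P i) = A"
proof (induct k arbitrary: A E j)
  case 0 then show ?case by simp
next
  case (Suc k)
  show ?case
  proof (cases "k = 0")
    case True
    then have "j = 0" using Suc by simp
    then show ?thesis using True Suc.prems
      by (intro exI[of _ "\<lambda>_. A"]) (auto simp: disjoint_family_on_def)
  next
    case False
    define c where "c = measure M A / real (Suc k)"
    have c0: "0 \<le> c" by (simp add: c_def)
    have "\<exists>B\<in>sets M. B \<subseteq> A \<and> measure M B = c \<and> (j \<ge> 1 \<longrightarrow> B \<subseteq> E)"
    proof (cases "j \<ge> 1")
      case True
      have "c \<le> real j * c" using True c0 by (simp add: mult_le_cancel_right1)
      also have "\<dots> \<le> measure M E" using Suc.prems by (simp add: c_def)
      finally obtain B where "B \<in> sets M" "B \<subseteq> E" "measure M B = c"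
        using sierpinski[OF na Suc.prems(3) c0] by blast
      then show ?thesis using Suc.prems by auto
    next
      case False
      have "c \<le> measure M A" using c0 by (auto simp: c_def field_simps)
      then obtain B where "B \<in> sets M" "B \<subseteq> A" "measure M B = c"
        using sierpinski[OF na Suc.prems(2) c0] by blast
      then show ?thesis using False by auto
    qed
    then obtain B where B: "B \<in> sets M" "B \<subseteq> A" "measure M B = c" "j \<ge> 1 \<Longrightarrow> B \<subseteq> E" by blast
    have mA': "measure M (A - B) = real k * c"
      using B Suc.prems by (simp add: finite_measure_Diff c_def field_simps)
    have cA': "measure M (A - B) / real k = c" using mA' False by simp
    have "\<exists>P. (\<forall>i<k. P i \<in> sets M \<and> P i \<subseteq> A - B \<and> measure M (P i) = measure M (A - B) / k) \<and> (\<forall>i<j - 1. P i \<subseteq> E - B)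
       \<and> disjoint_family_on P {..<k} \<and> (\<Union>i<k. P i) = A - B"
    proof (rule Suc.hyps)
      show "1 \<le> k" using False by simp
      show "A - B \<in> sets M" "E - B \<in> sets M" "E - B \<subseteq> A - B" using B Suc.prems by auto
      show "j - 1 < k" using Suc.prems False by simp
      show "real (j - 1) * (measure M (A - B) / real k) \<le> measure M (E - B)"
      proof (cases "j \<ge> 1")
        case True
        have mE: "measure M (E - B) = measure M E - c"
          using B True Suc.prems by (simp add: finite_measure_Diff)
        have "real (j - 1) * c = real j * c - c" using True by (simp add: of_nat_diff algebra_simps)
        also have "\<dots> \<le> measure M E - c" using Suc.prems by (simp add: c_def)
        finally show ?thesis using mE cA' by simp
      next
        case False then show ?thesis by simp
      qed
    qed
    then obtain P where P: "\<forall>i<k. P i \<in> sets M \<and> P i \<subseteq> A - B \<and> measure M (P i) = c"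
      "\<forall>i<j - 1. P i \<subseteq> E - B" "disjoint_family_on P {..<k}" "(\<Union>i<k. P i) = A - B"
      using cA' by auto
    define P' where "P' i = (if i = 0 then B else P (i - 1))" for i
    show ?thesis
    proof (intro exI[of _ P'] conjI allI impI)
      fix i assume i: "i < Suc k"
      have "P' i \<in> sets M \<and> P' i \<subseteq> A \<and> measure M (P' i) = c"
      proof (cases "i = 0")
        case True then show ?thesis using B by (simp add: P'_def)
      next
        case False
        then have "i - 1 < k" using i by simp
        then show ?thesis using P(1) False by (auto simp: P'_def)
      qed
      then show "P' i \<in> sets M" "P' i \<subseteq> A" "measure M (P' i) = measure M A / real (Suc k)"
        by (auto simp: c_def)
    next
      fix i assume i: "i < j"
      show "P' i \<subseteq> E"
      proof (cases "i = 0")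
        case True then show ?thesis using B i by (simp add: P'_def)
      next
        case False
        then have "i - 1 < j - 1" using i by simp
        then have "P (i - 1) \<subseteq> E - B" using P(2) by blast
        then show ?thesis using False by (auto simp: P'_def)
      qed
    next
      show "disjoint_family_on P' {..<Suc k}"
        unfolding disjoint_family_on_def
      proof (intro ballI impI)
        fix m n assume mn: "m \<in> {..<Suc k}" "n \<in> {..<Suc k}" "m \<noteq> n"
        show "P' m \<inter> P' n = {}"
        proof (cases "m = 0 \<or> n = 0")
          case True
          have Pd: "P i \<inter> B = {}" if "i < k" for i using P(1) that by blast
          show ?thesis
          proof (cases "m = 0")
            case True
            then have "n \<noteq> 0" "n - 1 < k" using mn by auto
            then show ?thesis using Pd[of "n - 1"] True by (auto simp: P'_def)
          next
            case False
            then have "n = 0" "m - 1 < k" using mn \<open>m = 0 \<or> n = 0\<close> by auto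
            then show ?thesis using Pd[of "m - 1"] False by (auto simp: P'_def)
          qed
        next
          case False
          then have "m - 1 \<in> {..<k}" "n - 1 \<in> {..<k}" "m - 1 \<noteq> n - 1" using mn by auto
          then have "P (m - 1) \<inter> P (n - 1) = {}" using P(3) unfolding disjoint_family_on_def by blast
          then show ?thesis using False by (auto simp: P'_def)
        qed
      qed
    next
      have "(\<Union>i<Suc k. P' i) = P' 0 \<union> (\<Union>i<k. P' (Suc i))"
        by (simp add: lessThan_Suc_eq_insert_0 image_image)
      also have "\<dots> = B \<union> (A - B)" using P(4) by (simp add: P'_def)
      also have "\<dots> = A" using B by auto
      finally show "(\<Union>i<Suc k. P' i) = A" .
    qed
  qed
qed

lemma sum_if_less:
  fixes f :: "nat \<Rightarrow> real"
  assumes "j \<le> N"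
  shows "(\<Sum>i<N. (if i < j then f i else 0)) = (\<Sum>i<j. f i)"
proof -
  have "(\<Sum>i<N. (if i < j then f i else 0)) = sum f {i\<in>{..<N}. i < j}"
    by (rule sum.inter_filter[symmetric]) simp
  also have "{i\<in>{..<N}. i < j} = {..<j}" using assms by auto
  finally show ?thesis .
qed

lemma (in finite_measure) abs_cont:
  fixes w :: "'a \<Rightarrow> real"
  assumes w: "integrable M w" "\<And>x. x \<in> space M \<Longrightarrow> 0 \<le> w x" and e: "e > 0"
  shows "\<exists>d>0. \<forall>D\<in>sets M. measure M D < d \<longrightarrow> (\<integral>x. indicator D x * w x \<partial>M) < e"
proof -
  define s where "s n x = w x - min (w x) (real n)" for n x
  have wm: "w \<in> borel_measurable M" using w by auto
  have sm: "s n \<in> borel_measurable M" for n unfolding s_def using wm by measurable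
  have conv: "AE x in M. (\<lambda>n. s n x) \<longlonglongrightarrow> 0"
  proof (rule AE_I2)
    fix x
    obtain N :: nat where N: "w x \<le> real N" using real_arch_simple by blast
    have "eventually (\<lambda>n. s n x = 0) sequentially"
      unfolding eventually_sequentially s_def
      by (rule exI[of _ N]) (use N in auto)
    then show "(\<lambda>n. s n x) \<longlonglongrightarrow> 0" by (rule tendsto_eventually)
  qed
  have bnd: "AE x in M. norm (s n x) \<le> w x" for n
    using w(2) by (intro AE_I2) (auto simp: s_def)
  have lim: "(\<lambda>n. \<integral>x. s n x \<partial>M) \<longlonglongrightarrow> (\<integral>x. 0 \<partial>M)"
    by (rule integral_dominated_convergence[OF _ sm w(1) conv bnd]) simp
  have sint: "integrable M (s n)" for n
    by (rule integrable_dominated_convergence2[OF _ sm w(1) conv bnd]) simp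
  have "eventually (\<lambda>n. (\<integral>x. s n x \<partial>M) < e / 2) sequentially"
    using lim e by (intro order_tendstoD) auto
  then obtain n where n: "(\<integral>x. s n x \<partial>M) < e / 2" by (auto simp: eventually_sequentially)
  define d where "d = e / (2 * (real n + 1))"
  have d0: "d > 0" using e by (simp add: d_def)
  have "\<forall>D\<in>sets M. measure M D < d \<longrightarrow> (\<integral>x. indicator D x * w x \<partial>M) < e"
  proof (intro ballI impI)
    fix D assume D: "D \<in> sets M" "measure M D < d"
    have bi: "integrable M (\<lambda>x. real n * indicator D x + s n x)"
      using D sint by (intro Bochner_Integration.integrable_add integrable_mult_right) (auto simp: emeasure_finite less_top[symmetric])
    have "(\<integral>x. indicator D x * w x \<partial>M) \<le> (\<integral>x. real n * indicator D x + s n x \<partial>M)"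
    proof (rule integral_mono'[OF bi])
      fix x assume x: "x \<in> space M"
      show "indicator D x * w x \<le> real n * indicator D x + s n x"
        using w(2)[OF x] by (auto simp: s_def indicator_def)
      show "0 \<le> real n * indicator D x + s n x"
        using w(2)[OF x] by (auto simp: s_def indicator_def)
    qed
    also have "\<dots> = real n * measure M D + (\<integral>x. s n x \<partial>M)"
      using D sint by (subst Bochner_Integration.integral_add) (auto simp: emeasure_finite less_top[symmetric])
    also have "real n * measure M D \<le> real n * d" using D by (intro mult_left_mono) auto
    also have "real n * d \<le> e / 2"
      using e by (simp add: d_def field_simps)
    finally show "(\<integral>x. indicator D x * w x \<partial>M) < e" using n by simp
  qed
  then show ?thesis using d0 by blast
qed

lemma (in finite_measure) approx_indicator:
  fixes w :: "'a \<Rightarrow> real"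
  assumes na: "\<And>A. \<not> atom M A" and m: "measure M (space M) > 0"
    and w: "integrable M w" "\<And>x. x \<in> space M \<Longrightarrow> 0 \<le> w x" and E: "E \<in> sets M" and e: "e > 0"
  shows "\<exists>g\<in>Xsp M. integrable M (\<lambda>x. \<bar>indicator E x - measure M E / measure M (space M) - g x\<bar> * w x)
     \<and> (\<integral>x. \<bar>indicator E x - measure M E / measure M (space M) - g x\<bar> * w x \<partial>M) < e"
proof -
  define m where "m = measure M (space M)"
  define a where "a = measure M E"
  have m0: "m > 0" using assms by (simp add: m_def)
  have a0: "0 \<le> a" and am: "a \<le> m" by (auto simp: a_def m_def bounded_measure)
  obtain d where d: "d > 0" "\<And>D. D \<in> sets M \<Longrightarrow> measure M D < d \<Longrightarrow> (\<integral>x. indicator D x * w x \<partial>M) < e / 2"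
    using abs_cont[OF w, of "e / 2"] e by auto
  define W where "W = (\<integral>x. w x \<partial>M)"
  have W0: "0 \<le> W" unfolding W_def using w(2) by (intro integral_nonneg_AE AE_I2) auto
  obtain N :: nat where N: "m / d + 2 * W / e + 1 < real N" using reals_Archimedean2 by blast
  have md0: "0 \<le> m / d" using m0 d by simp
  have We0: "0 \<le> 2 * W / e" using W0 e by simp
  have "1 < real N" using N md0 We0 by linarith
  then have N1: "1 \<le> N" by simp
  have Npos: "0 < real N" using N1 by simp
  have mNd: "m / N < d"
  proof -
    have "m / d < real N" using N We0 by linarith
    then have "m < real N * d" using d by (simp add: field_simps)
    then show ?thesis using Npos by (simp add: field_simps)
  qed
  have WN: "W / N < e / 2"
  proof -
    have "2 * W / e < real N" using N md0 by linarith
    then have "2 * W < real N * e" using e by (simp add: field_simps)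
    then show ?thesis using Npos by (simp add: field_simps)
  qed
  define j where "j = min (nat \<lfloor>a * N / m\<rfloor>) (N - 1)"
  have jN: "j < N" using N1 by (simp add: j_def)
  have jle: "real j \<le> a * N / m"
  proof -
    have "real j \<le> real (nat \<lfloor>a * N / m\<rfloor>)" by (simp add: j_def)
    also have "\<dots> = of_int \<lfloor>a * N / m\<rfloor>" using a0 m0 by simp
    also have "\<dots> \<le> a * N / m" by simp
    finally show ?thesis .
  qed
  have jge: "a * N / m - 1 \<le> real j"
  proof (cases "nat \<lfloor>a * N / m\<rfloor> \<le> N - 1")
    case True
    then have "real j = of_int \<lfloor>a * N / m\<rfloor>" using a0 m0 by (simp add: j_def)
    then show ?thesis by linarith
  next
    case False
    then have "real j = real N - 1" using N1 by (simp add: j_def of_nat_diff)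
    moreover have "a * N / m \<le> real N" using am m0 by (simp add: field_simps mult_right_mono)
    ultimately show ?thesis by linarith
  qed
  have jE: "real j * (measure M (space M) / real N) \<le> measure M E"
    using jle m0 Npos by (simp add: a_def m_def field_simps)
  obtain P where P: "\<forall>i<N. P i \<in> sets M \<and> P i \<subseteq> space M \<and> measure M (P i) = m / N"
    "\<forall>i<j. P i \<subseteq> E" "disjoint_family_on P {..<N}" "(\<Union>i<N. P i) = space M"
    using partition_lemma[OF na N1 sets.top E sets.sets_into_space[OF E] jN jE] unfolding m_def by blast
  define E' where "E' = (\<Union>i<j. P i)"
  have Pj: "disjoint_family_on P {..<j}" using jN by (intro disjoint_family_on_mono[OF _ P(3)]) auto
  have E'E: "E' \<subseteq> E" using P(2) by (auto simp: E'_def)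
  have E's: "E' \<in> sets M" using P(1) jN by (auto simp: E'_def)
  have mE': "measure M E' = real j * (m / N)"
  proof -
    have "measure M E' = (\<Sum>i<j. measure M (P i))"
      unfolding E'_def using P(1) jN Pj by (intro finite_measure_finite_Union) auto
    also have "\<dots> = (\<Sum>i<j. m / N)" using P(1) jN by (intro sum.cong) auto
    finally show ?thesis by simp
  qed
  define D where "D = E - E'"
  have Ds: "D \<in> sets M" using E E's by (simp add: D_def)
  have mD: "measure M D < d"
  proof -
    have "measure M D = a - real j * (m / N)" using E E's E'E mE' by (simp add: D_def finite_measure_Diff a_def)
    also have "\<dots> \<le> m / N"
    proof -
      have "a * N / m \<le> real j + 1" using jge by linarith
      then have "a * N \<le> (real j + 1) * m" using m0 by (simp add: pos_divide_le_eq)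
      then have "a \<le> (real j + 1) * m / N" using Npos by (simp add: pos_le_divide_eq mult.commute)
      moreover have "(real j + 1) * m / N = real j * (m / N) + m / N" by (simp add: distrib_right add_divide_distrib)
      ultimately show ?thesis by linarith
    qed
    finally show ?thesis using mNd by simp
  qed
  define c where "c i = (if i < j then 1 else 0) - real j / N" for i
  define g where "g x = (\<Sum>i<N. c i * (indicator (P i) x - indicator (P 0) x))" for x
  have gX: "g \<in> Xsp M"
  proof (rule XspI[where n=N and c=c and A=P and B="\<lambda>_. P 0"])
    show "\<forall>i<N. P i \<in> sets M \<and> P 0 \<in> sets M \<and> emeasure M (P i) = emeasure M (P 0)"
      using P(1) N1 by (auto simp: emeasure_eq_measure)
  qed (simp add: g_def fun_eq_iff)
  have gx: "g x = indicator E' x - real j / N" if x: "x \<in> space M" for x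
  proof -
    have "(indicator (\<Union>i<N. P i) x :: real) = (\<Sum>i<N. indicator (P i) x)"
      by (rule indicator_UN_disjoint[OF _ P(3)]) simp
    then have S1: "(\<Sum>i<N. indicator (P i) x) = (1::real)"
      using P(4) x by simp
    have "(indicator E' x :: real) = (\<Sum>i<j. indicator (P i) x)"
      unfolding E'_def by (rule indicator_UN_disjoint[OF _ Pj]) simp
    then have S2: "(\<Sum>i<j. indicator (P i) x) = (indicator E' x :: real)" by simp
    have Sc: "(\<Sum>i<N. c i) = 0"
      using sum_if_less[of j N "\<lambda>_. 1"] jN Npos by (simp add: c_def sum_subtractf)
    have "g x = (\<Sum>i<N. c i * indicator (P i) x) - (\<Sum>i<N. c i) * indicator (P 0) x"
      by (simp add: g_def sum_subtractf right_diff_distrib sum_distrib_right)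
    also have "(\<Sum>i<N. c i * indicator (P i) x) = (\<Sum>i<N. (if i < j then indicator (P i) x else 0) - real j / N * indicator (P i) x)"
      by (intro sum.cong) (auto simp: c_def left_diff_distrib)
    also have "\<dots> = (\<Sum>i<N. (if i < j then indicator (P i) x else 0)) - real j / N * (\<Sum>i<N. indicator (P i) x)"
      by (simp only: sum_subtractf sum_distrib_left)
    also have "\<dots> = indicator E' x - real j / N"
      using sum_if_less[of j N "\<lambda>i. indicator (P i) x"] jN S1 S2 by simp
    finally show ?thesis using Sc by simp
  qed
  define b where "b x = indicator D x * w x + w x / N" for x
  have i1: "integrable M (\<lambda>x. indicator D x * w x)"
    using integrable_real_mult_indicator[OF Ds w(1)] by (simp add: mult.commute)
  have i2: "integrable M (\<lambda>x. w x / real N)" using w(1) by simp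
  have bint: "integrable M b"
    unfolding b_def by (rule Bochner_Integration.integrable_add[OF i1 i2])
  have pt: "\<bar>indicator E x - a / m - g x\<bar> * w x \<le> b x" if x: "x \<in> space M" for x
  proof -
    have "indicator E x - indicator E' x = (indicator D x :: real)"
      using E'E by (auto simp: D_def indicator_def)
    moreover have "\<bar>real j / N - a / m\<bar> \<le> 1 / N"
    proof -
      have "real j / N \<le> (a * N / m) / N" using jle Npos by (rule divide_right_mono[OF _ less_imp_le])
      also have "(a * N / m) / N = a / m" using Npos by simp
      finally have h1: "real j / N \<le> a / m" .
      have "(a * N / m - 1) / N \<le> real j / N" using jge Npos by (rule divide_right_mono[OF _ less_imp_le])
      also have "(a * N / m - 1) / N = a / m - 1 / N" using Npos by (simp add: diff_divide_distrib)
      finally have h2: "a / m - 1 / N \<le> real j / N" by simp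
      show ?thesis using h1 h2 by (simp add: abs_le_iff)
    qed
    ultimately have "\<bar>indicator E x - a / m - g x\<bar> \<le> indicator D x + 1 / N"
    proof -
      assume eq: "indicator E x - indicator E' x = (indicator D x :: real)" and le: "\<bar>real j / N - a / m\<bar> \<le> 1 / N"
      have "indicator E x - a / m - g x = indicator D x + (real j / N - a / m)"
        using gx[OF x] eq by linarith
      moreover have "\<bar>indicator D x + (real j / N - a / m)\<bar> \<le> \<bar>indicator D x\<bar> + \<bar>real j / N - a / m\<bar>"
        by (rule abs_triangle_ineq)
      moreover have "\<bar>indicator D x :: real\<bar> = indicator D x" by simp
      ultimately show ?thesis using le by linarith
    qed
    then have "\<bar>indicator E x - a / m - g x\<bar> * w x \<le> (indicator D x + 1 / N) * w x"
      using w(2)[OF x] by (rule mult_right_mono)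
    then show ?thesis by (simp add: b_def algebra_simps)
  qed
  have b0: "0 \<le> b x" if "x \<in> space M" for x using w(2)[OF that] Npos by (simp add: b_def)
  have gm: "g \<in> borel_measurable M" using Xsp_props(1)[OF gX] .
  have int: "integrable M (\<lambda>x. \<bar>indicator E x - a / m - g x\<bar> * w x)"
  proof (rule Bochner_Integration.integrable_bound[OF bint])
    show "(\<lambda>x. \<bar>indicator E x - a / m - g x\<bar> * w x) \<in> borel_measurable M"
      using gm w(1) E by measurable
    show "AE x in M. norm (\<bar>indicator E x - a / m - g x\<bar> * w x) \<le> norm (b x)"
      using pt b0 w(2) by (intro AE_I2) (auto simp: abs_mult)
  qed
  have "(\<integral>x. \<bar>indicator E x - a / m - g x\<bar> * w x \<partial>M) \<le> (\<integral>x. b x \<partial>M)"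
    using int bint pt by (intro integral_mono) auto
  also have "\<dots> = (\<integral>x. indicator D x * w x \<partial>M) + W / N"
    unfolding b_def W_def by (simp add: Bochner_Integration.integral_add[OF i1 i2])
  also have "\<dots> < e / 2 + e / 2" using d(2)[OF Ds mD] WN by linarith
  finally have "(\<integral>x. \<bar>indicator E x - a / m - g x\<bar> * w x \<partial>M) < e" by simp
  then show ?thesis using gX int by (auto simp: a_def m_def)
qed

definition Apx :: "'a measure \<Rightarrow> ('a \<Rightarrow> real) \<Rightarrow> ('a \<Rightarrow> real) \<Rightarrow> bool" where
  "Apx M w u \<longleftrightarrow> u \<in> borel_measurable M \<and> (\<forall>e>0. \<exists>g\<in>Xsp M.
     integrable M (\<lambda>x. \<bar>u x - g x\<bar> * w x) \<and> (\<integral>x. \<bar>u x - g x\<bar> * w x \<partial>M) < e)"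

context finite_measure
begin

lemma Apx_add:
  fixes w :: "'a \<Rightarrow> real"
  assumes w: "integrable M w" "\<And>x. x \<in> space M \<Longrightarrow> 0 \<le> w x"
    and u: "Apx M w u" and v: "Apx M w v"
  shows "Apx M w (\<lambda>x. u x + v x)"
proof -
  have um: "u \<in> borel_measurable M" and vm: "v \<in> borel_measurable M" using u v by (auto simp: Apx_def)
  have wm: "w \<in> borel_measurable M" using w by auto
  have "\<exists>g\<in>Xsp M. integrable M (\<lambda>x. \<bar>u x + v x - g x\<bar> * w x) \<and> (\<integral>x. \<bar>u x + v x - g x\<bar> * w x \<partial>M) < e"
    if e: "e > 0" for e
  proof -
    obtain g1 where g1: "g1 \<in> Xsp M" "integrable M (\<lambda>x. \<bar>u x - g1 x\<bar> * w x)" "(\<integral>x. \<bar>u x - g1 x\<bar> * w x \<partial>M) < e / 2"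
      using u e unfolding Apx_def by (meson half_gt_zero)
    obtain g2 where g2: "g2 \<in> Xsp M" "integrable M (\<lambda>x. \<bar>v x - g2 x\<bar> * w x)" "(\<integral>x. \<bar>v x - g2 x\<bar> * w x \<partial>M) < e / 2"
      using v e unfolding Apx_def by (meson half_gt_zero)
    have g1m: "g1 \<in> borel_measurable M" and g2m: "g2 \<in> borel_measurable M" using g1 g2 Xsp_props(1) by auto
    let ?R = "\<lambda>x. \<bar>u x - g1 x\<bar> * w x + \<bar>v x - g2 x\<bar> * w x"
    have Rint: "integrable M ?R" using g1(2) g2(2) by (rule Bochner_Integration.integrable_add)
    have pt: "\<bar>u x + v x - (g1 x + g2 x)\<bar> * w x \<le> ?R x" if x: "x \<in> space M" for x
    proof -
      have "\<bar>u x + v x - (g1 x + g2 x)\<bar> \<le> \<bar>u x - g1 x\<bar> + \<bar>v x - g2 x\<bar>" by linarith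
      then have "\<bar>u x + v x - (g1 x + g2 x)\<bar> * w x \<le> (\<bar>u x - g1 x\<bar> + \<bar>v x - g2 x\<bar>) * w x"
        using w(2)[OF x] by (rule mult_right_mono)
      then show ?thesis by (simp add: distrib_right)
    qed
    have int: "integrable M (\<lambda>x. \<bar>u x + v x - (g1 x + g2 x)\<bar> * w x)"
    proof (rule Bochner_Integration.integrable_bound[OF Rint])
      show "(\<lambda>x. \<bar>u x + v x - (g1 x + g2 x)\<bar> * w x) \<in> borel_measurable M"
        using um vm g1m g2m wm by measurable
      show "AE x in M. norm (\<bar>u x + v x - (g1 x + g2 x)\<bar> * w x) \<le> norm (?R x)"
        using pt w(2) by (intro AE_I2) (auto simp: abs_mult intro!: order_trans[OF _ abs_ge_self])
    qed
    have "(\<integral>x. \<bar>u x + v x - (g1 x + g2 x)\<bar> * w x \<partial>M) \<le> (\<integral>x. ?R x \<partial>M)"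
      using int Rint pt by (intro integral_mono) auto
    also have "\<dots> = (\<integral>x. \<bar>u x - g1 x\<bar> * w x \<partial>M) + (\<integral>x. \<bar>v x - g2 x\<bar> * w x \<partial>M)"
      by (rule Bochner_Integration.integral_add[OF g1(2) g2(2)])
    also have "\<dots> < e" using g1(3) g2(3) by linarith
    finally show ?thesis using int Xsp_add[OF g1(1) g2(1)] by (intro bexI[of _ "\<lambda>x. g1 x + g2 x"]) auto
  qed
  then show ?thesis using um vm by (auto simp: Apx_def)
qed

lemma Apx_scale:
  fixes w :: "'a \<Rightarrow> real"
  assumes u: "Apx M w u"
  shows "Apx M w (\<lambda>x. r * u x)"
proof -
  have um: "u \<in> borel_measurable M" using u by (auto simp: Apx_def)
  have "\<exists>g\<in>Xsp M. integrable M (\<lambda>x. \<bar>r * u x - g x\<bar> * w x) \<and> (\<integral>x. \<bar>r * u x - g x\<bar> * w x \<partial>M) < e"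
    if e: "e > 0" for e
  proof -
    have e': "e / (\<bar>r\<bar> + 1) > 0" using e by simp
    obtain g where g: "g \<in> Xsp M" "integrable M (\<lambda>x. \<bar>u x - g x\<bar> * w x)" "(\<integral>x. \<bar>u x - g x\<bar> * w x \<partial>M) < e / (\<bar>r\<bar> + 1)"
      using u e' unfolding Apx_def by blast
    have eq: "\<bar>r * u x - r * g x\<bar> * w x = \<bar>r\<bar> * (\<bar>u x - g x\<bar> * w x)" for x
      by (simp add: abs_mult right_diff_distrib[symmetric])
    have int: "integrable M (\<lambda>x. \<bar>r * u x - r * g x\<bar> * w x)"
      unfolding eq using g(2) by (rule integrable_mult_right)
    have "(\<integral>x. \<bar>r * u x - r * g x\<bar> * w x \<partial>M) = \<bar>r\<bar> * (\<integral>x. \<bar>u x - g x\<bar> * w x \<partial>M)"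
      unfolding eq by simp
    also have "\<dots> \<le> \<bar>r\<bar> * (e / (\<bar>r\<bar> + 1))" using g(3) by (intro mult_left_mono) auto
    also have "\<dots> < e" using e by (simp add: field_simps)
    finally show ?thesis using int Xsp_scale[OF g(1), of r] by (intro bexI[of _ "\<lambda>x. r * g x"]) auto
  qed
  then show ?thesis using um by (auto simp: Apx_def)
qed

lemma Apx_zero:
  fixes w :: "'a \<Rightarrow> real"
  shows "Apx M w (\<lambda>x. 0)"
  unfolding Apx_def using Xsp_zero
  by (auto intro!: bexI[of _ "\<lambda>x. 0"])

lemma Apx_sum:
  fixes w :: "'a \<Rightarrow> real"
  assumes w: "integrable M w" "\<And>x. x \<in> space M \<Longrightarrow> 0 \<le> w x"
  shows "finite S \<Longrightarrow> (\<And>y. y \<in> S \<Longrightarrow> Apx M w (F y)) \<Longrightarrow> Apx M w (\<lambda>x. \<Sum>y\<in>S. F y x)"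
proof (induct S rule: finite_induct)
  case empty then show ?case using Apx_zero by simp
next
  case (insert a S)
  then have "Apx M w (\<lambda>x. F a x + (\<Sum>y\<in>S. F y x))" by (intro Apx_add[OF w]) auto
  then show ?case using insert by simp
qed

lemma Apx_cong:
  fixes w :: "'a \<Rightarrow> real"
  assumes u: "Apx M w u" and eq: "\<And>x. x \<in> space M \<Longrightarrow> u x = v x"
  shows "Apx M w v"
proof -
  have "v \<in> borel_measurable M" using u eq measurable_cong[of M u v] by (auto simp: Apx_def)
  moreover have "integrable M (\<lambda>x. \<bar>u x - g x\<bar> * w x) = integrable M (\<lambda>x. \<bar>v x - g x\<bar> * w x)" for g
    using eq by (intro Bochner_Integration.integrable_cong) auto
  moreover have "(\<integral>x. \<bar>u x - g x\<bar> * w x \<partial>M) = (\<integral>x. \<bar>v x - g x\<bar> * w x \<partial>M)" for g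
    using eq by (intro Bochner_Integration.integral_cong) auto
  ultimately show ?thesis using u unfolding Apx_def by metis
qed

end

context finite_measure
begin

lemma Apx_phi:
  fixes w :: "'a \<Rightarrow> real"
  assumes na: "\<And>A. \<not> atom M A" and m: "measure M (space M) > 0"
    and w: "integrable M w" "\<And>x. x \<in> space M \<Longrightarrow> 0 \<le> w x" and E: "E \<in> sets M"
  shows "Apx M w (\<lambda>x. indicator E x - measure M E / measure M (space M))"
  unfolding Apx_def
proof (intro conjI allI impI)
  show "(\<lambda>x. indicator E x - measure M E / measure M (space M)) \<in> borel_measurable M"
    using E by measurable
next
  fix e :: real assume "e > 0"
  then show "\<exists>g\<in>Xsp M. integrable M (\<lambda>x. \<bar>indicator E x - measure M E / measure M (space M) - g x\<bar> * w x) \<and>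
          (\<integral>x. \<bar>indicator E x - measure M E / measure M (space M) - g x\<bar> * w x \<partial>M) < e"
    using approx_indicator[OF na m w E] by blast
qed

lemma Apx_simple:
  fixes w :: "'a \<Rightarrow> real"
  assumes na: "\<And>A. \<not> atom M A" and m: "measure M (space M) > 0"
    and w: "integrable M w" "\<And>x. x \<in> space M \<Longrightarrow> 0 \<le> w x" and s: "simple_function M s"
  shows "Apx M w (\<lambda>x. s x - (\<integral>x. s x \<partial>M) / measure M (space M))"
proof -
  define V where "V = s ` space M"
  define Ev where "Ev y = s -` {y} \<inter> space M" for y
  have V: "finite V" using s by (simp add: V_def simple_functionD)
  have Evs: "Ev y \<in> sets M" for y using s by (simp add: Ev_def simple_functionD)
  have rep: "s x = (\<Sum>y\<in>V. y * indicator (Ev y) x)" if "x \<in> space M" for x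
  proof -
    have "s x = (\<Sum>y\<in>V. indicator (Ev y) x *\<^sub>R y)"
      using simple_function_indicator_representation_banach[OF s that] unfolding V_def Ev_def .
    also have "\<dots> = (\<Sum>y\<in>V. y * indicator (Ev y) x)"
      by (intro sum.cong refl) (simp only: real_scaleR_def mult.commute)
    finally show ?thesis .
  qed
  have iint: "integrable M (\<lambda>x. y * indicator (Ev y) x :: real)" for y
    using Evs[of y] by (intro integrable_mult_right) (auto simp: emeasure_finite less_top[symmetric])
  have "(\<integral>x. s x \<partial>M) = (\<integral>x. (\<Sum>y\<in>V. y * indicator (Ev y) x) \<partial>M)"
    using rep by (intro Bochner_Integration.integral_cong) auto
  also have "\<dots> = (\<Sum>y\<in>V. (\<integral>x. y * indicator (Ev y) x \<partial>M))"
    by (rule Bochner_Integration.integral_sum) (use iint in auto)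
  also have "\<dots> = (\<Sum>y\<in>V. y * measure M (Ev y))"
    using Evs by (intro sum.cong) (auto simp: Int_absorb2 sets.sets_into_space)
  finally have int_s: "(\<integral>x. s x \<partial>M) = (\<Sum>y\<in>V. y * measure M (Ev y))" .
  have "Apx M w (\<lambda>x. \<Sum>y\<in>V. y * (indicator (Ev y) x - measure M (Ev y) / measure M (space M)))"
    using V by (intro Apx_sum[OF w] Apx_scale Apx_phi[OF na m w Evs])
  then show ?thesis
  proof (rule Apx_cong)
    fix x assume x: "x \<in> space M"
    have "(\<Sum>y\<in>V. y * (indicator (Ev y) x - measure M (Ev y) / measure M (space M)))
      = (\<Sum>y\<in>V. y * indicator (Ev y) x) - (\<Sum>y\<in>V. y * measure M (Ev y)) / measure M (space M)"
      by (simp add: right_diff_distrib sum_subtractf sum_divide_distrib)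
    also have "\<dots> = s x - (\<integral>x. s x \<partial>M) / measure M (space M)"
      using rep[OF x] int_s by simp
    finally show "(\<Sum>y\<in>V. y * (indicator (Ev y) x - measure M (Ev y) / measure M (space M)))
      = s x - (\<integral>x. s x \<partial>M) / measure M (space M)" .
  qed
qed

end

context finite_measure
begin

lemma null_space_AE:
  assumes "measure M (space M) = 0"
  shows "AE x in M. P x"
proof (rule AE_I'[of "space M"])
  show "space M \<in> null_sets M" using assms by (intro null_setsI) (auto simp: emeasure_eq_measure)
qed auto

lemma Apx_general:
  fixes w f :: "'a \<Rightarrow> real"
  assumes na: "\<And>A. \<not> atom M A"
    and w: "integrable M w" "\<And>x. x \<in> space M \<Longrightarrow> 0 \<le> w x"
    and f: "integrable M f" and fw: "integrable M (\<lambda>x. f x * w x)"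
  shows "Apx M w (\<lambda>x. f x - (\<integral>x. f x \<partial>M) / measure M (space M))"
proof -
  have fm: "f \<in> borel_measurable M" using f by auto
  have wm: "w \<in> borel_measurable M" using w by auto
  have Tm: "(\<lambda>x. f x - (\<integral>x. f x \<partial>M) / measure M (space M)) \<in> borel_measurable M" using fm by measurable
  show ?thesis
  proof (cases "measure M (space M) = 0")
    case True
    have AE: "AE x in M. P x" for P using null_space_AE[OF True] .
    show ?thesis unfolding Apx_def
    proof (intro conjI allI impI Tm)
      fix e :: real assume e: "e > 0"
      let ?h = "\<lambda>x. \<bar>f x - (\<integral>x. f x \<partial>M) / measure M (space M) - 0\<bar> * w x"
      have hm: "?h \<in> borel_measurable M" using fm wm by measurable
      have "integrable M ?h \<longleftrightarrow> integrable M (\<lambda>x. 0::real)"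
        using hm AE by (intro integrable_cong_AE) auto
      moreover have "(\<integral>x. ?h x \<partial>M) = (\<integral>x. 0 \<partial>M)"
        using hm AE by (intro integral_cong_AE) auto
      ultimately show "\<exists>g\<in>Xsp M. integrable M (\<lambda>x. \<bar>f x - (\<integral>x. f x \<partial>M) / measure M (space M) - g x\<bar> * w x) \<and>
          (\<integral>x. \<bar>f x - (\<integral>x. f x \<partial>M) / measure M (space M) - g x\<bar> * w x \<partial>M) < e"
        using e Xsp_zero by (intro bexI[of _ "\<lambda>x. 0"]) auto
    qed
  next
    case False
    then have m: "measure M (space M) > 0" using measure_nonneg[of M "space M"] by linarith
    define m where "m = measure M (space M)"
    have m0: "m > 0" using m by (simp add: m_def)
    obtain s where s: "\<And>i. simple_function M (s i)" "\<And>x. x \<in> space M \<Longrightarrow> (\<lambda>i. s i x) \<longlonglongrightarrow> f x"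
      "\<And>i x. x \<in> space M \<Longrightarrow> dist (s i x) 0 \<le> 2 * dist (f x) 0"
      using borel_measurable_implies_sequence_metric[OF fm, of 0] by blast
    have sm: "s i \<in> borel_measurable M" for i using s(1) by (rule borel_measurable_simple_function)
    have sb: "\<bar>s i x\<bar> \<le> 2 * \<bar>f x\<bar>" if "x \<in> space M" for i x using s(3)[OF that] by (simp add: dist_real_def)
    let ?L = "\<lambda>i x. \<bar>s i x - f x\<bar> * w x"
    have Lm: "?L i \<in> borel_measurable M" for i using sm fm wm by measurable
    have fwa: "integrable M (\<lambda>x. 3 * \<bar>f x * w x\<bar>)" using fw by auto
    have Lconv: "AE x in M. (\<lambda>i. ?L i x) \<longlonglongrightarrow> 0"
    proof (rule AE_I2)
      fix x assume x: "x \<in> space M"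
      have "(\<lambda>i. \<bar>s i x - f x\<bar> * w x) \<longlonglongrightarrow> \<bar>f x - f x\<bar> * w x"
        by (intro tendsto_intros s(2)[OF x])
      then show "(\<lambda>i. ?L i x) \<longlonglongrightarrow> 0" by simp
    qed
    have Lbnd: "AE x in M. norm (?L i x) \<le> 3 * \<bar>f x * w x\<bar>" for i
    proof (rule AE_I2)
      fix x assume x: "x \<in> space M"
      have "\<bar>s i x - f x\<bar> \<le> 3 * \<bar>f x\<bar>" using sb[OF x, of i] by linarith
      then have "\<bar>s i x - f x\<bar> * w x \<le> 3 * \<bar>f x\<bar> * w x" using w(2)[OF x] by (rule mult_right_mono)
      then show "norm (?L i x) \<le> 3 * \<bar>f x * w x\<bar>" using w(2)[OF x] by (simp add: abs_mult)
    qed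
    have Llim: "(\<lambda>i. \<integral>x. ?L i x \<partial>M) \<longlonglongrightarrow> (\<integral>x. 0 \<partial>M)"
      by (rule integral_dominated_convergence[OF _ Lm fwa Lconv Lbnd]) simp
    have Lint: "integrable M (?L i)" for i
      by (rule integrable_dominated_convergence2[OF _ Lm fwa Lconv Lbnd]) simp
    have fa: "integrable M (\<lambda>x. 2 * \<bar>f x\<bar>)" using f by auto
    have sconv: "AE x in M. (\<lambda>i. s i x) \<longlonglongrightarrow> f x" using s(2) by (intro AE_I2)
    have sbnd: "AE x in M. norm (s i x) \<le> 2 * \<bar>f x\<bar>" for i using sb by (intro AE_I2) auto
    have Ilim: "(\<lambda>i. \<integral>x. s i x \<partial>M) \<longlonglongrightarrow> (\<integral>x. f x \<partial>M)"
      by (rule integral_dominated_convergence[OF fm sm fa sconv sbnd])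
    define W where "W = (\<integral>x. w x \<partial>M)"
    have W0: "0 \<le> W" unfolding W_def using w(2) by (intro integral_nonneg_AE AE_I2) auto
    have Clim: "(\<lambda>i. \<bar>(\<integral>x. s i x \<partial>M) - (\<integral>x. f x \<partial>M)\<bar> / m * W) \<longlonglongrightarrow> \<bar>(\<integral>x. f x \<partial>M) - (\<integral>x. f x \<partial>M)\<bar> / m * W"
      using m0 by (intro tendsto_intros Ilim) auto
    have sint: "integrable M (s i)" for i
      by (rule integrable_dominated_convergence2[OF fm sm fa sconv sbnd])
    show ?thesis unfolding Apx_def
    proof (intro conjI allI impI Tm)
      fix e :: real assume e: "e > 0"
      have ev1: "eventually (\<lambda>i. (\<integral>x. ?L i x \<partial>M) < e / 3) sequentially"
        using Llim e by (intro order_tendstoD) auto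
      have ev2: "eventually (\<lambda>i. \<bar>(\<integral>x. s i x \<partial>M) - (\<integral>x. f x \<partial>M)\<bar> / m * W < e / 3) sequentially"
        using Clim e by (intro order_tendstoD) auto
      obtain i where i1: "(\<integral>x. ?L i x \<partial>M) < e / 3"
        and i2: "\<bar>(\<integral>x. s i x \<partial>M) - (\<integral>x. f x \<partial>M)\<bar> / m * W < e / 3"
        using eventually_conj[OF ev1 ev2] by (auto simp: eventually_sequentially)
      have "Apx M w (\<lambda>x. s i x - (\<integral>x. s i x \<partial>M) / m)"
        unfolding m_def by (rule Apx_simple[OF na m w s(1)])
      moreover have "e / 3 > 0" using e by simp
      ultimately obtain g where g: "g \<in> Xsp M" "integrable M (\<lambda>x. \<bar>s i x - (\<integral>x. s i x \<partial>M) / m - g x\<bar> * w x)"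
        "(\<integral>x. \<bar>s i x - (\<integral>x. s i x \<partial>M) / m - g x\<bar> * w x \<partial>M) < e / 3"
        unfolding Apx_def by blast
      have gm: "g \<in> borel_measurable M" using Xsp_props(1)[OF g(1)] .
      define C where "C = \<bar>(\<integral>x. s i x \<partial>M) - (\<integral>x. f x \<partial>M)\<bar> / m"
      let ?R = "\<lambda>x. ?L i x + C * w x + \<bar>s i x - (\<integral>x. s i x \<partial>M) / m - g x\<bar> * w x"
      have Rint: "integrable M ?R"
        using Lint g(2) w(1) by (intro Bochner_Integration.integrable_add integrable_mult_right) auto
      let ?H = "\<lambda>x. \<bar>f x - (\<integral>x. f x \<partial>M) / m - g x\<bar> * w x"
      have pt: "?H x \<le> ?R x" if x: "x \<in> space M" for x
      proof -
        have eq: "f x - (\<integral>x. f x \<partial>M) / m - g x = - (s i x - f x) + ((\<integral>x. s i x \<partial>M) - (\<integral>x. f x \<partial>M)) / m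
                   + (s i x - (\<integral>x. s i x \<partial>M) / m - g x)"
          by (simp add: diff_divide_distrib)
        define A where "A = s i x - f x"
        define B where "B = ((\<integral>x. s i x \<partial>M) - (\<integral>x. f x \<partial>M)) / m"
        define Cc where "Cc = s i x - (\<integral>x. s i x \<partial>M) / m - g x"
        have t1: "\<bar>- A + B + Cc\<bar> \<le> \<bar>- A + B\<bar> + \<bar>Cc\<bar>" by (rule abs_triangle_ineq)
        have t2: "\<bar>- A + B\<bar> \<le> \<bar>- A\<bar> + \<bar>B\<bar>" by (rule abs_triangle_ineq)
        have t3: "\<bar>- A\<bar> = \<bar>A\<bar>" by simp
        have t4: "\<bar>B\<bar> = C" unfolding B_def C_def using m0 by (simp add: abs_divide)
        have "\<bar>f x - (\<integral>x. f x \<partial>M) / m - g x\<bar> \<le> \<bar>s i x - f x\<bar> + C + \<bar>s i x - (\<integral>x. s i x \<partial>M) / m - g x\<bar>"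
          unfolding eq using t1 t2 t3 t4 unfolding A_def B_def Cc_def by linarith
        then have "?H x \<le> (\<bar>s i x - f x\<bar> + C + \<bar>s i x - (\<integral>x. s i x \<partial>M) / m - g x\<bar>) * w x"
          using w(2)[OF x] by (rule mult_right_mono)
        then show ?thesis by (simp add: distrib_right)
      qed
      have Hint: "integrable M ?H"
      proof (rule Bochner_Integration.integrable_bound[OF Rint])
        show "?H \<in> borel_measurable M" using fm gm wm by measurable
        show "AE x in M. norm (?H x) \<le> norm (?R x)"
          using pt w(2) by (intro AE_I2) (auto simp: abs_mult intro!: order_trans[OF _ abs_ge_self])
      qed
      have "(\<integral>x. ?H x \<partial>M) \<le> (\<integral>x. ?R x \<partial>M)"
        using Hint Rint pt by (intro integral_mono) auto
      also have "\<dots> = (\<integral>x. ?L i x \<partial>M) + C * W + (\<integral>x. \<bar>s i x - (\<integral>x. s i x \<partial>M) / m - g x\<bar> * w x \<partial>M)"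
        using Lint g(2) w(1) unfolding W_def
        by (simp add: Bochner_Integration.integral_add)
      also have "\<dots> < e / 3 + e / 3 + e / 3" using i1 i2 g(3) unfolding C_def by linarith
      finally have "(\<integral>x. ?H x \<partial>M) < e" by simp
      then show "\<exists>g\<in>Xsp M. integrable M (\<lambda>x. \<bar>f x - (\<integral>x. f x \<partial>M) / measure M (space M) - g x\<bar> * w x) \<and>
          (\<integral>x. \<bar>f x - (\<integral>x. f x \<partial>M) / measure M (space M) - g x\<bar> * w x \<partial>M) < e"
        using Hint g(1) unfolding m_def by blast
    qed
  qed
qed

end

theorem lemma1p3:
  fixes M :: "'a measure"
  assumes "finite_measure M"
    and "\<And>A. \<not> atom M A"
  shows "L1_closure M (Xsp M) = {f \<in> L1 M. (\<integral>x. f x \<partial>M) = 0}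
     \<and> weak_star_closure M (Xsp M) = {f \<in> Linfty M. (\<integral>x. f x \<partial>M) = 0}"
proof -
  interpret finite_measure M by fact
  note na = assms(2)
  have zero_of: "z = 0" if "\<And>e. e > 0 \<Longrightarrow> \<bar>z\<bar> < e" for z :: real
  proof (rule ccontr)
    assume "z \<noteq> 0"
    then have "\<bar>z\<bar> > 0" by simp
    from that[OF this] show False by simp
  qed
  have one_int: "integrable M (\<lambda>x. 1::real)" by simp
  have L1eq: "L1_closure M (Xsp M) = {f \<in> L1 M. (\<integral>x. f x \<partial>M) = 0}"
  proof (intro set_eqI iffI)
    fix f assume "f \<in> L1_closure M (Xsp M)"
    then have fi: "integrable M f" and cl: "\<And>e. e > 0 \<Longrightarrow> \<exists>g\<in>Xsp M. g \<in> L1 M \<and> (\<integral>x. \<bar>f x - g x\<bar> \<partial>M) < e"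
      unfolding L1_closure_def L1_def by auto
    have "(\<integral>x. f x \<partial>M) = 0"
    proof (rule zero_of)
      fix e :: real assume e: "e > 0"
      then obtain g where g: "g \<in> Xsp M" "(\<integral>x. \<bar>f x - g x\<bar> \<partial>M) < e" using cl by blast
      have gi: "integrable M g" and g0: "(\<integral>x. g x \<partial>M) = 0" using Xsp_props[OF g(1)] by auto
      have "(\<integral>x. f x \<partial>M) = (\<integral>x. f x - g x \<partial>M)"
        using fi gi g0 by (simp add: Bochner_Integration.integral_diff)
      then have "\<bar>\<integral>x. f x \<partial>M\<bar> \<le> (\<integral>x. \<bar>f x - g x\<bar> \<partial>M)"
        using integral_abs_bound[of M "\<lambda>x. f x - g x"] by simp
      then show "\<bar>\<integral>x. f x \<partial>M\<bar> < e" using g(2) by linarith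
    qed
    then show "f \<in> {f \<in> L1 M. (\<integral>x. f x \<partial>M) = 0}" using fi by (simp add: L1_def)
  next
    fix f assume "f \<in> {f \<in> L1 M. (\<integral>x. f x \<partial>M) = 0}"
    then have fi: "integrable M f" and f0: "(\<integral>x. f x \<partial>M) = 0" by (auto simp: L1_def)
    have "Apx M (\<lambda>x. 1) (\<lambda>x. f x - (\<integral>x. f x \<partial>M) / measure M (space M))"
      by (rule Apx_general[OF na one_int]) (use fi in auto)
    then have A: "Apx M (\<lambda>x. 1) f" using f0 by simp
    have "\<exists>g\<in>Xsp M. g \<in> L1 M \<and> (\<integral>x. \<bar>f x - g x\<bar> \<partial>M) < e" if e: "e > 0" for e
    proof -
      obtain g where "g \<in> Xsp M" "(\<integral>x. \<bar>f x - g x\<bar> * 1 \<partial>M) < e" using A e unfolding Apx_def by blast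
      then show ?thesis using Xsp_props(2) by (auto simp: L1_def)
    qed
    then show "f \<in> L1_closure M (Xsp M)" using fi unfolding L1_closure_def L1_def by auto
  qed
  have Linf_int: "integrable M f" if fL0: "f \<in> Linfty M" for f
  proof -
    obtain C where fm: "f \<in> borel_measurable M" and C: "AE x in M. \<bar>f x\<bar> \<le> C"
      using fL0 unfolding Linfty_def mem_Collect_eq by blast
    show ?thesis
    proof (rule Bochner_Integration.integrable_bound[of M "\<lambda>x. C"])
      show "integrable M (\<lambda>x. C)" by simp
      show "f \<in> borel_measurable M" by fact
      show "AE x in M. norm (f x) \<le> norm C" using C by eventually_elim auto
    qed
  qed
  have Xsp_Linf: "g \<in> Linfty M" if "g \<in> Xsp M" for g
    using Xsp_props(1,4)[OF that] unfolding Linfty_def by auto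
  have Leq: "weak_star_closure M (Xsp M) = {f \<in> Linfty M. (\<integral>x. f x \<partial>M) = 0}"
  proof (intro set_eqI iffI)
    fix f assume fw: "f \<in> weak_star_closure M (Xsp M)"
    then have fL: "f \<in> Linfty M" unfolding weak_star_closure_def by auto
    have fi: "integrable M f" using Linf_int[OF fL] .
    have "(\<integral>x. f x \<partial>M) = 0"
    proof (rule zero_of)
      fix e :: real assume e: "e > 0"
      have H1: "finite {\<lambda>x. 1::real} \<and> {\<lambda>x. 1::real} \<subseteq> L1 M \<and> e > 0" using e by (auto simp: L1_def)
      have "\<forall>H e. finite H \<and> H \<subseteq> L1 M \<and> e > 0 \<longrightarrow>
          (\<exists>g\<in>Xsp M. g \<in> Linfty M \<and> (\<forall>h\<in>H. \<bar>\<integral>x. (f x - g x) * h x \<partial>M\<bar> < e))"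
        using fw unfolding weak_star_closure_def mem_Collect_eq by (elim conjE)
      then have "\<exists>g\<in>Xsp M. g \<in> Linfty M \<and> (\<forall>h\<in>{\<lambda>x. 1::real}. \<bar>\<integral>x. (f x - g x) * h x \<partial>M\<bar> < e)"
        using H1 by (elim allE[of _ "{\<lambda>x. 1::real}"] allE[of _ e]) (erule mp)
      then obtain g where g: "g \<in> Xsp M" "\<bar>\<integral>x. (f x - g x) * 1 \<partial>M\<bar> < e"
        by auto
      have gi: "integrable M g" and g0: "(\<integral>x. g x \<partial>M) = 0" using Xsp_props[OF g(1)] by auto
      have "(\<integral>x. (f x - g x) * 1 \<partial>M) = (\<integral>x. f x \<partial>M)"
        using fi gi g0 by (simp add: Bochner_Integration.integral_diff)
      then show "\<bar>\<integral>x. f x \<partial>M\<bar> < e" using g(2) by simp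
    qed
    then show "f \<in> {f \<in> Linfty M. (\<integral>x. f x \<partial>M) = 0}" using fL by simp
  next
    fix f assume "f \<in> {f \<in> Linfty M. (\<integral>x. f x \<partial>M) = 0}"
    then have fL: "f \<in> Linfty M" and f0: "(\<integral>x. f x \<partial>M) = 0" by auto
    have fi: "integrable M f" using Linf_int[OF fL] .
    obtain C where fm: "f \<in> borel_measurable M" and C: "AE x in M. \<bar>f x\<bar> \<le> C"
      using fL unfolding Linfty_def mem_Collect_eq by blast
    have "\<exists>g\<in>Xsp M. g \<in> Linfty M \<and> (\<forall>h\<in>H. \<bar>\<integral>x. (f x - g x) * h x \<partial>M\<bar> < e)"
      if H: "finite H" "H \<subseteq> L1 M" and e: "e > 0" for H e
    proof -
      define w where "w x = (\<Sum>h\<in>H. \<bar>h x\<bar>)" for x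
      have hi: "integrable M h" if "h \<in> H" for h using H that by (auto simp: L1_def)
      have wi: "integrable M w" unfolding w_def
        by (rule Bochner_Integration.integrable_sum) (use hi in auto)
      have w0: "0 \<le> w x" for x unfolding w_def by (intro sum_nonneg) auto
      have wm: "w \<in> borel_measurable M" using wi by auto
      have hw: "\<bar>h x\<bar> \<le> w x" if "h \<in> H" for h x
        unfolding w_def using H(1) that by (intro member_le_sum) auto
      have fwi: "integrable M (\<lambda>x. f x * w x)"
      proof (rule Bochner_Integration.integrable_bound[of M "\<lambda>x. C * w x"])
        show "integrable M (\<lambda>x. C * w x)" using wi by simp
        show "(\<lambda>x. f x * w x) \<in> borel_measurable M" using fm wm by measurable
        show "AE x in M. norm (f x * w x) \<le> norm (C * w x)"
          using C
        proof eventually_elim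
          fix x assume "\<bar>f x\<bar> \<le> C"
          then have "\<bar>f x\<bar> * w x \<le> C * w x" using w0[of x] by (rule mult_right_mono)
          moreover have "C * w x \<le> \<bar>C\<bar> * w x" using w0[of x] by (intro mult_right_mono) auto
          ultimately show "norm (f x * w x) \<le> norm (C * w x)" using w0[of x] by (simp add: abs_mult)
        qed
      qed
      have "Apx M w (\<lambda>x. f x - (\<integral>x. f x \<partial>M) / measure M (space M))"
        by (rule Apx_general[OF na wi _ fi fwi]) (use w0 in auto)
      then have A: "Apx M w f" using f0 by simp
      then obtain g where g: "g \<in> Xsp M" "integrable M (\<lambda>x. \<bar>f x - g x\<bar> * w x)" "(\<integral>x. \<bar>f x - g x\<bar> * w x \<partial>M) < e"
        using e unfolding Apx_def by blast
      have gm: "g \<in> borel_measurable M" using Xsp_props(1)[OF g(1)] .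
      have "\<bar>\<integral>x. (f x - g x) * h x \<partial>M\<bar> < e" if h: "h \<in> H" for h
      proof -
        have hm: "h \<in> borel_measurable M" using hi[OF h] by auto
        have pt: "\<bar>(f x - g x) * h x\<bar> \<le> \<bar>f x - g x\<bar> * w x" for x
          using hw[OF h, of x] by (simp add: abs_mult mult_left_mono)
        have ii: "integrable M (\<lambda>x. (f x - g x) * h x)"
        proof (rule Bochner_Integration.integrable_bound[OF g(2)])
          show "(\<lambda>x. (f x - g x) * h x) \<in> borel_measurable M" using fm gm hm by measurable
          show "AE x in M. norm ((f x - g x) * h x) \<le> norm (\<bar>f x - g x\<bar> * w x)"
            using pt w0 by (intro AE_I2) (simp add: abs_mult)
        qed
        have "\<bar>\<integral>x. (f x - g x) * h x \<partial>M\<bar> \<le> (\<integral>x. \<bar>(f x - g x) * h x\<bar> \<partial>M)"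
          by (rule integral_abs_bound)
        also have "\<dots> \<le> (\<integral>x. \<bar>f x - g x\<bar> * w x \<partial>M)"
          using ii g(2) pt by (intro integral_mono) auto
        finally show ?thesis using g(3) by linarith
      qed
      then show ?thesis using g(1) Xsp_Linf[OF g(1)] by blast
    qed
    then show "f \<in> weak_star_closure M (Xsp M)" using fL unfolding weak_star_closure_def by auto
  qed
  show ?thesis using L1eq Leq by simp
qed

end
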